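(* Let $G$ be a graph on $n$ vertices ($n$ even and sufficiently large) in which every vertex has at least $n-\sqrt{n}/4000$ neighbors. If a perfect matching of $G$ is chosen uniformly at random, then for any edge $e$ the probability that $e$ is contained in the matching is at most $\frac{1}{n-\sqrt{n}/1000}$. *)

theory Defs
  imports Complex_Main
begin

definition simple_graph :: "'a set \<Rightarrow> 'a set set \<Rightarrow> bool" where
  "simple_graph V E \<longleftrightarrow> finite V \<and>
     (\<forall>e\<in>E. \<exists>u v. u \<noteq> v \<and> u \<in> V \<and> v \<in> V \<and> e = {u, v})"

definition degree :: "'a set \<Rightarrow> 'a set set \<Rightarrow> 'a \<Rightarrow> nat" where
  "degree V E v = card {u \<in> V. {u, v} \<in> E}"

definition perfect_matching :: "'a set \<Rightarrow> 'a set set \<Rightarrow> 'a set set \<Rightarrow> bool" where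
  "perfect_matching V E M \<longleftrightarrow> M \<subseteq> E \<and> (\<forall>v\<in>V. \<exists>!e. e \<in> M \<and> v \<in> e)"

definition perfect_matchings :: "'a set \<Rightarrow> 'a set set \<Rightarrow> 'a set set set" where
  "perfect_matchings V E = {M. perfect_matching V E M}"

definition prob_edge_in_pm :: "'a set \<Rightarrow> 'a set set \<Rightarrow> 'a set \<Rightarrow> real" where
  "prob_edge_in_pm V E e =
     real (card {M \<in> perfect_matchings V E. e \<in> M}) / real (card (perfect_matchings V E))"

end

theory Submission
  imports Defs
begin

context
  fixes V :: "'a set" and E :: "'a set set" and a b :: 'a
  assumes sg: "simple_graph V E" and eE: "{a,b} \<in> E" and ab: "a \<noteq> b"
begin

lemma finV: "finite V" using sg by (simp add: simple_graph_def)

lemma edgeE: "g \<in> E \<Longrightarrow> \<exists>u v. u \<noteq> v \<and> u \<in> V \<and> v \<in> V \<and> g = {u,v}"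
  using sg by (simp add: simple_graph_def)

lemma pair_in_E: "{x,y} \<in> E \<Longrightarrow> x \<noteq> y \<and> x \<in> V \<and> y \<in> V"
  using edgeE[of "{x,y}"] by (auto simp: doubleton_eq_iff)

lemma aV: "a \<in> V" and bV: "b \<in> V" using pair_in_E[OF eE] by auto

lemma finE: "finite E"
proof -
  have "E \<subseteq> Pow V" using edgeE by blast
  thus ?thesis using finV finite_subset by blast
qed

lemma pm_sub: "M \<in> perfect_matchings V E \<Longrightarrow> M \<subseteq> E"
  by (simp add: perfect_matchings_def perfect_matching_def)

lemma pm_uniq: "M \<in> perfect_matchings V E \<Longrightarrow> v \<in> V \<Longrightarrow> g1 \<in> M \<Longrightarrow> g2 \<in> M
   \<Longrightarrow> v \<in> g1 \<Longrightarrow> v \<in> g2 \<Longrightarrow> g1 = g2"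
  by (simp add: perfect_matchings_def perfect_matching_def) blast

lemma pm_ex: "M \<in> perfect_matchings V E \<Longrightarrow> v \<in> V \<Longrightarrow> \<exists>g\<in>M. v \<in> g"
  by (simp add: perfect_matchings_def perfect_matching_def) blast

lemma finPM: "finite (perfect_matchings V E)"
proof -
  have "perfect_matchings V E \<subseteq> Pow E" using pm_sub by blast
  thus ?thesis using finE finite_subset by blast
qed

definition "AA = {M \<in> perfect_matchings V E. {a,b} \<in> M}"
definition "QQ M = {(x,y). {x,y} \<in> M \<and> x \<in> V \<and> x \<noteq> a \<and> x \<noteq> b}"
definition "PP M = {(x,y). {x,y} \<in> M \<and> x \<in> V \<and> x \<noteq> a \<and> x \<noteq> b \<and> {a,x} \<in> E \<and> {b,y} \<in> E}"
definition "Phi = (\<lambda>(M,(x,y)). insert {a,x} (insert {b,y} (M - {{a,b},{x,y}})))"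

lemma QQ_facts:
  assumes M: "M \<in> AA" and q: "(x,y) \<in> QQ M"
  shows "x \<noteq> y" "x \<in> V" "y \<in> V" "x \<noteq> a" "x \<noteq> b" "y \<noteq> a" "y \<noteq> b" "{x,y} \<in> M"
proof -
  have pm: "M \<in> perfect_matchings V E" and eM: "{a,b} \<in> M" using M by (auto simp: AA_def)
  have xy: "{x,y} \<in> M" "x \<in> V" "x \<noteq> a" "x \<noteq> b" using q by (auto simp: QQ_def)
  have "{x,y} \<in> E" using pm_sub[OF pm] xy by blast
  from pair_in_E[OF this] show "x \<noteq> y" "x \<in> V" "y \<in> V" by auto
  show "x \<noteq> a" "x \<noteq> b" "{x,y} \<in> M" by fact+
  show "y \<noteq> a"
  proof
    assume "y = a"
    then have "{x,y} = {a,b}" using pm_uniq[OF pm aV xy(1) eM] by auto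
    thus False using xy ab by (auto simp: doubleton_eq_iff)
  qed
  show "y \<noteq> b"
  proof
    assume "y = b"
    then have "{x,y} = {a,b}" using pm_uniq[OF pm bV xy(1) eM] by auto
    thus False using xy ab by (auto simp: doubleton_eq_iff)
  qed
qed

lemma card_QQ:
  assumes M: "M \<in> AA"
  shows "card (QQ M) = card V - 2"
proof -
  have pm: "M \<in> perfect_matchings V E" using M by (auto simp: AA_def)
  have "bij_betw fst (QQ M) (V - {a,b})"
  proof (rule bij_betw_imageI)
    show "inj_on fst (QQ M)"
    proof (rule inj_onI)
      fix p q assume p: "p \<in> QQ M" and q: "q \<in> QQ M" and eq: "fst p = fst q"
      obtain x y where pxy: "p = (x,y)" by (cases p)
      obtain x' y' where qxy: "q = (x',y')" by (cases q)
      have 1: "{x,y} \<in> M" "x \<in> V" using p pxy by (auto simp: QQ_def)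
      have 2: "{x,y'} \<in> M" using q qxy eq pxy by (auto simp: QQ_def)
      have "{x,y} = {x,y'}" using pm_uniq[OF pm 1(2) 1(1) 2] by simp
      hence "y = y'" by (auto simp: doubleton_eq_iff)
      thus "p = q" using pxy qxy eq by simp
    qed
    show "fst ` QQ M = V - {a,b}"
    proof
      show "fst ` QQ M \<subseteq> V - {a, b}" by (auto simp: QQ_def)
      show "V - {a, b} \<subseteq> fst ` QQ M"
      proof
        fix x assume x: "x \<in> V - {a,b}"
        then obtain g where g: "g \<in> M" "x \<in> g" using pm_ex[OF pm] by blast
        have "g \<in> E" using g pm_sub[OF pm] by blast
        then obtain u v where "g = {u,v}" using edgeE by blast
        then obtain y where "g = {x,y}" using g by auto
        hence "(x,y) \<in> QQ M" using g x by (auto simp: QQ_def)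
        thus "x \<in> fst ` QQ M" by force
      qed
    qed
  qed
  hence "card (QQ M) = card (V - {a,b})" by (rule bij_betw_same_card)
  also have "\<dots> = card V - 2" using finV aV bV ab by (simp add: card_Diff_subset)
  finally show ?thesis .
qed

definition "Ka = {x \<in> V - {a,b}. {a,x} \<notin> E}"
definition "Kb = {y \<in> V - {a,b}. {b,y} \<notin> E}"

lemma finQQ: "M \<in> AA \<Longrightarrow> finite (QQ M)"
proof -
  assume M: "M \<in> AA"
  have "QQ M \<subseteq> V \<times> V" using QQ_facts[OF M] by auto
  thus ?thesis using finV finite_subset by blast
qed

lemma card_PP:
  assumes M: "M \<in> AA"
  shows "real (card (PP M)) \<ge> real (card V) - 2 - real (card Ka) - real (card Kb)"
proof -
  have pm: "M \<in> perfect_matchings V E" using M by (auto simp: AA_def)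
  define Ba where "Ba = {p \<in> QQ M. {a, fst p} \<notin> E}"
  define Bb where "Bb = {p \<in> QQ M. {b, snd p} \<notin> E}"
  have sub: "QQ M - (Ba \<union> Bb) \<subseteq> PP M"
    by (auto simp: Ba_def Bb_def QQ_def PP_def)
  have finP: "finite (PP M)"
  proof -
    have "PP M \<subseteq> QQ M" by (auto simp: QQ_def PP_def)
    thus ?thesis using finQQ[OF M] finite_subset by blast
  qed
  have "card Ba \<le> card Ka"
  proof (rule card_inj_on_le[where f=fst])
    show "inj_on fst Ba"
    proof (rule inj_onI)
      fix p q assume p: "p \<in> Ba" and q: "q \<in> Ba" and eq: "fst p = fst q"
      obtain x y where pxy: "p = (x,y)" by (cases p)
      obtain x' y' where qxy: "q = (x',y')" by (cases q)
      have 1: "{x,y} \<in> M" "x \<in> V" using p pxy by (auto simp: Ba_def QQ_def)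
      have 2: "{x,y'} \<in> M" using q qxy eq pxy by (auto simp: Ba_def QQ_def)
      have "{x,y} = {x,y'}" using pm_uniq[OF pm 1(2) 1(1) 2] by simp
      hence "y = y'" by (auto simp: doubleton_eq_iff)
      thus "p = q" using pxy qxy eq by simp
    qed
    show "fst ` Ba \<subseteq> Ka" by (auto simp: Ba_def Ka_def QQ_def)
    show "finite Ka" using finV by (simp add: Ka_def)
  qed
  moreover have "card Bb \<le> card Kb"
  proof (rule card_inj_on_le[where f=snd])
    show "inj_on snd Bb"
    proof (rule inj_onI)
      fix p q assume p: "p \<in> Bb" and q: "q \<in> Bb" and eq: "snd p = snd q"
      obtain x y where pxy: "p = (x,y)" by (cases p)
      obtain x' y' where qxy: "q = (x',y')" by (cases q)
      have pq: "(x,y) \<in> QQ M" "(x',y) \<in> QQ M" using p q pxy qxy eq by (auto simp: Bb_def)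
      have "{x,y} = {x',y}" using pm_uniq[OF pm QQ_facts(3)[OF M pq(1)] QQ_facts(8)[OF M pq(1)] QQ_facts(8)[OF M pq(2)]] by simp
      hence "x = x'" by (auto simp: doubleton_eq_iff)
      thus "p = q" using pxy qxy eq by simp
    qed
    show "snd ` Bb \<subseteq> Kb"
    proof
      fix y assume "y \<in> snd ` Bb"
      then obtain x where xy: "(x,y) \<in> Bb" by force
      hence q: "(x,y) \<in> QQ M" and "{b,y} \<notin> E" by (auto simp: Bb_def)
      thus "y \<in> Kb" using QQ_facts[OF M q] by (auto simp: Kb_def)
    qed
    show "finite Kb" using finV by (simp add: Kb_def)
  qed
  moreover have "card (QQ M) \<le> card (PP M) + card (Ba \<union> Bb)"
  proof -
    have "card (QQ M) \<le> card ((QQ M - (Ba \<union> Bb)) \<union> (Ba \<union> Bb))"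
      using finQQ[OF M] by (intro card_mono) (auto simp: Ba_def Bb_def)
    also have "\<dots> \<le> card (QQ M - (Ba \<union> Bb)) + card (Ba \<union> Bb)" by (rule card_Un_le)
    also have "\<dots> \<le> card (PP M) + card (Ba \<union> Bb)"
      using card_mono[OF finP sub] by simp
    finally show ?thesis .
  qed
  moreover have "card (Ba \<union> Bb) \<le> card Ba + card Bb" by (rule card_Un_le)
  ultimately have "card (QQ M) \<le> card (PP M) + card Ka + card Kb" by linarith
  hence "real (card (QQ M)) \<le> real (card (PP M)) + real (card Ka) + real (card Kb)" by linarith
  moreover have "real (card (QQ M)) = real (card V) - 2"
  proof -
    have "card V \<ge> 2"
    proof -
      have "card {a,b} \<le> card V" using finV aV bV by (intro card_mono) auto
      thus ?thesis using ab by simp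
    qed
    thus ?thesis using card_QQ[OF M] by simp
  qed
  ultimately show ?thesis by linarith
qed

lemma card_Ka: "real (card Ka) = real (card V) - 1 - real (degree V E a)"
proof -
  define Na where "Na = {x \<in> V - {a,b}. {a,x} \<in> E}"
  have fin: "finite (V - {a,b})" using finV by simp
  have "card (V - {a,b}) = card (Na \<union> Ka)"
    by (rule arg_cong[where f=card]) (auto simp: Na_def Ka_def)
  also have "\<dots> = card Na + card Ka"
    using fin by (intro card_Un_disjoint) (auto simp: Na_def Ka_def)
  finally have "card (V - {a,b}) = card Na + card Ka" .
  moreover have "card (V - {a,b}) = card V - 2" using finV aV bV ab by (simp add: card_Diff_subset)
  moreover have "{u \<in> V. {u,a} \<in> E} = insert b Na"
    using eE aV bV pair_in_E[of a a] by (auto simp: Na_def insert_commute)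
  hence "degree V E a = card Na + 1" using fin
    by (simp add: degree_def Na_def)
  moreover have "card V \<ge> 2"
    proof -
      have "card {a,b} \<le> card V" using finV aV bV by (intro card_mono) auto
      thus ?thesis using ab by simp
    qed
  ultimately show ?thesis by linarith
qed

lemma card_Kb: "real (card Kb) = real (card V) - 1 - real (degree V E b)"
proof -
  define Nb where "Nb = {x \<in> V - {a,b}. {b,x} \<in> E}"
  have fin: "finite (V - {a,b})" using finV by simp
  have "card (V - {a,b}) = card (Nb \<union> Kb)"
    by (rule arg_cong[where f=card]) (auto simp: Nb_def Kb_def)
  also have "\<dots> = card Nb + card Kb"
    using fin by (intro card_Un_disjoint) (auto simp: Nb_def Kb_def)
  finally have "card (V - {a,b}) = card Nb + card Kb" .
  moreover have "card (V - {a,b}) = card V - 2" using finV aV bV ab by (simp add: card_Diff_subset)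
  moreover have "{u \<in> V. {u,b} \<in> E} = insert a Nb"
    using eE aV bV pair_in_E[of b b] by (auto simp: Nb_def insert_commute)
  hence "degree V E b = card Nb + 1" using fin
    by (simp add: degree_def Nb_def)
  moreover have "card V \<ge> 2"
    proof -
      have "card {a,b} \<le> card V" using finV aV bV by (intro card_mono) auto
      thus ?thesis using ab by simp
    qed
  ultimately show ?thesis by linarith
qed

lemma PP_QQ: "PP M \<subseteq> QQ M" by (auto simp: QQ_def PP_def)

lemma Phi_props:
  assumes M: "M \<in> AA" and p: "(x,y) \<in> PP M"
  shows "Phi (M,(x,y)) \<in> perfect_matchings V E - AA"
    "M = insert {a,b} (insert {x,y} (Phi (M,(x,y)) - {{a,x},{b,y}}))"
    "{a,x} \<in> Phi (M,(x,y))" "{b,y} \<in> Phi (M,(x,y))" "x \<noteq> a" "y \<noteq> b"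
proof -
  have pm: "M \<in> perfect_matchings V E" and eM: "{a,b} \<in> M" using M by (auto simp: AA_def)
  have q: "(x,y) \<in> QQ M" using p PP_QQ by blast
  note F = QQ_facts[OF M q]
  have axE: "{a,x} \<in> E" and byE: "{b,y} \<in> E" using p by (auto simp: PP_def)
  define M' where "M' = insert {a,x} (insert {b,y} (M - {{a,b},{x,y}}))"
  have PhiM: "Phi (M,(x,y)) = M'" by (simp add: Phi_def M'_def)
  have K: "v \<notin> {a,b,x,y}" if g: "g \<in> M - {{a,b},{x,y}}" "v \<in> g" for g v
  proof -
    have "g \<in> E" using g pm_sub[OF pm] by blast
    then obtain u w where "g = {u,w}" "u \<in> V" "w \<in> V" using edgeE by blast
    hence vV: "v \<in> V" using g by auto
    show ?thesis
    proof
      assume "v \<in> {a,b,x,y}"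
      hence "v \<in> {a,b} \<or> v \<in> {x,y}" by auto
      thus False
      proof
        assume "v \<in> {a,b}" hence "g = {a,b}" using pm_uniq[OF pm vV _ eM] g by blast
        thus False using g by simp
      next
        assume "v \<in> {x,y}" hence "g = {x,y}" using pm_uniq[OF pm vV _ F(8)] g by blast
        thus False using g by simp
      qed
    qed
  qed
  have ME: "M' \<subseteq> E" using pm_sub[OF pm] axE byE by (auto simp: M'_def)
  have cover: "\<exists>!g. g \<in> M' \<and> v \<in> g" if vV: "v \<in> V" for v
  proof -
    have ex: "\<exists>g. g \<in> M' \<and> v \<in> g"
    proof (cases "v \<in> {a,b,x,y}")
      case True thus ?thesis by (auto simp: M'_def)
    next
      case False
      then obtain g where g: "g \<in> M" "v \<in> g" using pm_ex[OF pm vV] by blast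
      hence "g \<noteq> {a,b}" "g \<noteq> {x,y}" using False by auto
      thus ?thesis using g by (auto simp: M'_def)
    qed
    have un: "g1 = g2" if "g1 \<in> M'" "v \<in> g1" "g2 \<in> M'" "v \<in> g2" for g1 g2
    proof -
      have dis: "{a,x} \<inter> {b,y} = {}" using F ab by auto
      show ?thesis
      proof (cases "g1 \<in> M - {{a,b},{x,y}}")
        case True
        with K have v1: "v \<notin> {a,b,x,y}" using that by blast
        show ?thesis
        proof (cases "g2 \<in> M - {{a,b},{x,y}}")
          case True thus ?thesis using \<open>g1 \<in> M - _\<close> pm_uniq[OF pm vV] that by blast
        next
          case False thus ?thesis using that v1 by (auto simp: M'_def)
        qed
      next
        case False
        hence g1: "g1 = {a,x} \<or> g1 = {b,y}" using that by (auto simp: M'_def)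
        hence v1: "v \<in> {a,b,x,y}" using that by auto
        hence "g2 \<notin> M - {{a,b},{x,y}}" using K that by blast
        hence "g2 = {a,x} \<or> g2 = {b,y}" using that by (auto simp: M'_def)
        thus ?thesis using g1 that dis by auto
      qed
    qed
    show ?thesis using ex un by blast
  qed
  have pmM': "M' \<in> perfect_matchings V E"
    using ME cover by (simp add: perfect_matchings_def perfect_matching_def)
  have "{a,b} \<notin> M'" using F ab by (auto simp: M'_def doubleton_eq_iff)
  thus "Phi (M,(x,y)) \<in> perfect_matchings V E - AA" using pmM' PhiM by (simp add: AA_def)
  have n1: "{a,x} \<notin> M"
  proof
    assume "{a,x} \<in> M" hence "{a,x} = {a,b}" using pm_uniq[OF pm aV _ eM] by blast
    thus False using F ab by (auto simp: doubleton_eq_iff)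
  qed
  have n2: "{b,y} \<notin> M"
  proof
    assume "{b,y} \<in> M" hence "{b,y} = {a,b}" using pm_uniq[OF pm bV _ eM] by blast
    thus False using F ab by (auto simp: doubleton_eq_iff)
  qed
  have "M' - {{a,x},{b,y}} = M - {{a,b},{x,y}}" using n1 n2 by (auto simp: M'_def)
  thus "M = insert {a,b} (insert {x,y} (Phi (M,(x,y)) - {{a,x},{b,y}}))"
    using PhiM eM F(8) by auto
  show "{a,x} \<in> Phi (M,(x,y))" "{b,y} \<in> Phi (M,(x,y))" using PhiM by (auto simp: M'_def)
  show "x \<noteq> a" "y \<noteq> b" using F by auto
qed

lemma Phi_inj: "inj_on Phi (Sigma AA PP)"
proof (rule inj_onI)
  fix p q assume p: "p \<in> Sigma AA PP" and q: "q \<in> Sigma AA PP" and eq: "Phi p = Phi q"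
  obtain M1 x1 y1 where p1: "p = (M1,(x1,y1))" by (cases p) auto
  obtain M2 x2 y2 where q1: "q = (M2,(x2,y2))" by (cases q) auto
  have A1: "M1 \<in> AA" "(x1,y1) \<in> PP M1" using p p1 by auto
  have A2: "M2 \<in> AA" "(x2,y2) \<in> PP M2" using q q1 by auto
  note P1 = Phi_props[OF A1] and P2 = Phi_props[OF A2]
  define M' where "M' = Phi p"
  have pm': "M' \<in> perfect_matchings V E" using P1(1) p1 M'_def by simp
  have "{a,x1} \<in> M'" "{a,x2} \<in> M'" "{b,y1} \<in> M'" "{b,y2} \<in> M'"
    using P1(3,4) P2(3,4) p1 q1 eq M'_def by auto
  hence "{a,x1} = {a,x2}" "{b,y1} = {b,y2}" using pm_uniq[OF pm' aV] pm_uniq[OF pm' bV] by auto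
  hence "x1 = x2" "y1 = y2" using P1(5,6) P2(5,6) by (auto simp: doubleton_eq_iff)
  hence "M1 = M2" using P1(2) P2(2) eq p1 q1 by metis
  thus "p = q" using p1 q1 \<open>x1 = x2\<close> \<open>y1 = y2\<close> by simp
qed

lemma main_bound:
  "real (card (perfect_matchings V E)) \<ge>
     real (card AA) * (real (card V) - 1 - real (card Ka) - real (card Kb))"
proof -
  have finA: "finite AA" using finPM by (simp add: AA_def)
  have finS: "finite (Sigma AA PP)"
    using finA finQQ PP_QQ finite_subset by (intro finite_SigmaI) blast+
  have "card (Sigma AA PP) = card (Phi ` Sigma AA PP)" using Phi_inj by (simp add: card_image)
  also have "\<dots> \<le> card (perfect_matchings V E - AA)"
    using Phi_props(1) finPM by (intro card_mono) auto
  also have "\<dots> = card (perfect_matchings V E) - card AA"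
    using finPM by (intro card_Diff_subset) (auto simp: AA_def finA)
  finally have c1: "card (Sigma AA PP) + card AA \<le> card (perfect_matchings V E)"
  proof -
    assume h: "card (Sigma AA PP) \<le> card (perfect_matchings V E) - card AA"
    have "card AA \<le> card (perfect_matchings V E)" using finPM by (intro card_mono) (auto simp: AA_def)
    thus ?thesis using h by linarith
  qed
  have "card (Sigma AA PP) = (\<Sum>M\<in>AA. card (PP M))"
    using finA finQQ PP_QQ finite_subset by (intro card_SigmaI) blast+
  hence "real (card (Sigma AA PP)) = (\<Sum>M\<in>AA. real (card (PP M)))" by simp
  also have "\<dots> \<ge> (\<Sum>M\<in>AA. real (card V) - 2 - real (card Ka) - real (card Kb))"
    using card_PP by (intro sum_mono) auto
  finally have "real (card (Sigma AA PP)) \<ge> real (card AA) * (real (card V) - 2 - real (card Ka) - real (card Kb))"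
    by simp
  thus ?thesis using c1 by (simp add: algebra_simps)
qed

end

theorem mainTheorem14:
  shows "\<exists>N::nat. \<forall>(V::nat set) (E::nat set set) (e::nat set) (n::nat).
     simple_graph V E \<longrightarrow> card V = n \<longrightarrow> even n \<longrightarrow> n \<ge> N \<longrightarrow>
     (\<forall>v\<in>V. real (degree V E v) \<ge> real n - sqrt (real n) / 4000) \<longrightarrow>
     e \<in> E \<longrightarrow>
     prob_edge_in_pm V E e \<le> 1 / (real n - sqrt (real n) / 1000)"
proof (intro exI[of _ 0] allI impI)
  fix V :: "nat set" and E e and n :: nat
  assume sg: "simple_graph V E" and cV: "card V = n" and deg: "\<forall>v\<in>V. real (degree V E v) \<ge> real n - sqrt (real n) / 4000"
    and eE: "e \<in> E"
  obtain a b where ab: "a \<noteq> b" "a \<in> V" "b \<in> V" "e = {a,b}"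
    using sg eE by (auto simp: simple_graph_def)
  have eE': "{a,b} \<in> E" using eE ab by simp
  have fin: "finite V" using sg by (simp add: simple_graph_def)
  have "card {a,b} \<le> card V" using fin ab by (intro card_mono) auto
  hence n2: "n \<ge> 2" using ab cV by simp
  define s where "s = sqrt (real n)"
  have s0: "s \<ge> 0" by (simp add: s_def)
  have sn: "s \<le> real n"
  proof -
    have "real n \<ge> 1" using n2 by simp
    hence "1 \<le> sqrt (real n)" by simp
    hence "sqrt (real n) * 1 \<le> sqrt (real n) * sqrt (real n)"
      by (intro mult_left_mono) auto
    thus ?thesis using s_def by simp
  qed
  define c where "c = real n - s / 1000"
  have cpos: "c > 0" using sn n2 by (simp add: c_def)
  note KA = card_Ka[OF sg eE' ab(1)] and KB = card_Kb[OF sg eE' ab(1)]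
  note MB = main_bound[OF sg eE' ab(1)]
  have da: "real (degree V E a) \<ge> real n - s / 4000" and db: "real (degree V E b) \<ge> real n - s / 4000"
    using deg ab s_def by auto
  have L: "real (card V) - 1 - real (card (Ka V E a b)) - real (card (Kb V E a b)) \<ge> c"
    using KA KB da db cV s0 by (simp add: c_def)
  define cA where "cA = real (card (AA V E a b))"
  define cP where "cP = real (card (perfect_matchings V E))"
  have cA0: "cA \<ge> 0" by (simp add: cA_def)
  have B: "cP \<ge> cA * c"
    using MB L cA0 unfolding cA_def[symmetric] cP_def[symmetric]
    by (meson mult_left_mono order_trans)
  have prob: "prob_edge_in_pm V E e = cA / cP"
    by (simp add: prob_edge_in_pm_def cA_def cP_def AA_def[OF sg eE' ab(1)] ab(4))
  show "prob_edge_in_pm V E e \<le> 1 / (real n - sqrt (real n) / 1000)"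
  proof (cases "cA = 0")
    case True thus ?thesis using prob cpos by (simp add: c_def s_def)
  next
    case False
    hence "cA > 0" using cA0 by simp
    hence cP0: "cP > 0" using B cpos by (smt (verit) mult_pos_pos)
    have "cA / cP \<le> 1 / c" using B cP0 cpos by (simp add: divide_simps mult.commute)
    thus ?thesis using prob by (simp add: c_def s_def)
  qed
qed

end
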